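(* Let $m \geq 2$ be an integer and let $p \in \left(\frac{1}{m}, 1\right)$. Then $$\mathbb{P}_{X \sim B(m,p)}\big[X \geq mp\big] \;\geq\; 1 - \max_{k \in \{1, \ldots, m-1\}} \mathbb{P}_{X \sim B(m,\frac{k}{m})}\big[X \leq k\big].$$
   Context: $B(m,p)$ denotes the binomial distribution with $m$ trials and success probability $p$: $\mathbb{P}[X=j]=\binom{m}{j}p^j(1-p)^{m-j}$ for $j=0,\dots,m$; its mean is $mp$. *)

theory Defs
  imports "HOL-Probability.Probability"
begin

end

theory Submission imports Defs begin
lemma binrec:
  assumes "0 \<le> p" "p \<le> 1"
  shows "measure_pmf.prob (binomial_pmf (Suc n) p) A =
     p * measure_pmf.prob (binomial_pmf n p) ((\<lambda>x. Suc x) -` A) + (1-p) * measure_pmf.prob (binomial_pmf n p) A"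
proof -
  have eq: "binomial_pmf (Suc n) p = bind_pmf (bernoulli_pmf p) (\<lambda>b. map_pmf (\<lambda>k. (if b then 1 else 0) + k) (binomial_pmf n p))"
    using assms by (simp add: binomial_pmf_Suc map_pmf_def)
  have h1: "((+) (Suc 0)) -` A = Suc -` A" "((+) (0::nat)) -` A = A" by auto
  have "ennreal (measure_pmf.prob (binomial_pmf (Suc n) p) A) = emeasure (binomial_pmf (Suc n) p) A"
    by (simp add: measure_pmf.emeasure_eq_measure)
  also have "\<dots> = ennreal (measure_pmf.prob (binomial_pmf n p) ((\<lambda>x. Suc x) -` A)) * p + ennreal (measure_pmf.prob (binomial_pmf n p) A) * (1-p)"
    unfolding eq emeasure_bind_pmf using assms
    by (subst nn_integral_bernoulli_pmf) (auto simp: measure_pmf.emeasure_eq_measure h1)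
  also have "\<dots> = ennreal (p * measure_pmf.prob (binomial_pmf n p) ((\<lambda>x. Suc x) -` A) + (1-p) * measure_pmf.prob (binomial_pmf n p) A)"
    using assms by (simp add: ennreal_plus[symmetric] ennreal_mult[symmetric] mult.commute del: ennreal_plus)
  finally show ?thesis using assms by (subst (asm) ennreal_inj) auto
qed
lemma binmono:
  assumes "0 \<le> q" "q \<le> p" "p \<le> 1"
  shows "measure_pmf.prob (binomial_pmf n p) {..k} \<le> measure_pmf.prob (binomial_pmf n q) {..k}"
  using assms
proof (induction n arbitrary: k)
  case 0
  then show ?case by (simp add: binomial_pmf_0)
next
  case (Suc n)
  define ap where "ap = measure_pmf.prob (binomial_pmf n p) (Suc -` {..k})"
  define aq where "aq = measure_pmf.prob (binomial_pmf n q) (Suc -` {..k})"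
  define bp where "bp = measure_pmf.prob (binomial_pmf n p) {..k}"
  define bq where "bq = measure_pmf.prob (binomial_pmf n q) {..k}"
  have a: "ap \<le> aq"
  proof (cases k)
    case 0
    then have "Suc -` {..k} = {}" by auto
    then show ?thesis unfolding ap_def aq_def by simp
  next
    case (Suc j)
    then have "Suc -` {..k} = {..j}" by auto
    then show ?thesis unfolding ap_def aq_def using Suc.IH[of j] Suc.prems by simp
  qed
  have b: "bp \<le> bq" unfolding bp_def bq_def using Suc.IH[of k] Suc.prems by simp
  have ab: "aq \<le> bq" unfolding aq_def bq_def
    by (rule measure_pmf.finite_measure_mono) auto
  have "p * ap + (1-p) * bp \<le> p * aq + (1-p) * bq"
    using a b Suc.prems by (intro add_mono mult_left_mono) auto
  also have "\<dots> \<le> q * aq + (1-q) * bq"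
  proof -
    have "(p - q) * (bq - aq) \<ge> 0" using ab Suc.prems by simp
    then show ?thesis by (simp add: algebra_simps)
  qed
  finally show ?case
    using Suc.prems by (simp add: binrec ap_def aq_def bp_def bq_def)
qed

theorem corollary1:
  fixes m :: nat and p :: real
  assumes "m \<ge> 2" and "1 / real m < p" and "p < 1"
  shows "measure_pmf.prob (binomial_pmf m p) {x. real x \<ge> real m * p}
         \<ge> 1 - Max ((\<lambda>k. measure_pmf.prob (binomial_pmf m (real k / real m)) {x. x \<le> k}) ` {1..m-1})"
proof -
  have mpos: "real m > 0" using assms by simp
  have p0: "p > 0" using assms(2) mpos by (smt (verit) divide_pos_pos)
  have mp1: "real m * p > 1" using assms(2) mpos by (simp add: field_simps)
  have mpm: "real m * p < real m" using assms(3) mpos by simp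
  define c where "c = ceiling (real m * p)"
  define k where "k = nat c - 1"
  have c2: "c \<ge> 2" unfolding c_def using mp1 by linarith
  have cm: "c \<le> int m" unfolding c_def using mpm by linarith
  have k1: "k \<in> {1..m-1}" unfolding k_def using c2 cm by auto
  have keq: "\<And>x::nat. (real x < real m * p) \<longleftrightarrow> x \<le> k"
  proof -
    fix x :: nat
    have "(real x < real m * p) \<longleftrightarrow> int x < c"
      unfolding c_def using less_ceiling_iff[of "int x" "real m * p"] by simp
    also have "\<dots> \<longleftrightarrow> x \<le> k" unfolding k_def using c2 by auto
    finally show "(real x < real m * p) \<longleftrightarrow> x \<le> k" .
  qed
  have kle: "real k / real m \<le> p"
  proof -
    have "real k < real m * p" using keq by simp
    then show ?thesis using mpos by (simp add: field_simps)
  qed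
  have compl: "{x. real x \<ge> real m * p} = UNIV - {x. x \<le> k}"
    using keq by (auto simp: not_le[symmetric])
  have "measure_pmf.prob (binomial_pmf m p) {x. real x \<ge> real m * p} = 1 - measure_pmf.prob (binomial_pmf m p) {x. x \<le> k}"
    unfolding compl using measure_pmf.prob_compl[of "{x. x \<le> k}" "binomial_pmf m p"] by simp
  moreover have "measure_pmf.prob (binomial_pmf m p) {x. x \<le> k} \<le> measure_pmf.prob (binomial_pmf m (real k / real m)) {x. x \<le> k}"
    using binmono[of "real k / real m" p m k] kle assms(3) by (simp add: atMost_def)
  moreover have "measure_pmf.prob (binomial_pmf m (real k / real m)) {x. x \<le> k} \<le> Max ((\<lambda>k. measure_pmf.prob (binomial_pmf m (real k / real m)) {x. x \<le> k}) ` {1..m-1})"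
    using k1 by (intro Max_ge) auto
  ultimately show ?thesis by linarith
qed
end
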